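(* Let $X$ be a $\mathbb{P}^1(\mathbb{R})$-valued random variable satisfying $X\sim \frac1X+\epsilon$, where $\epsilon\sim\mathrm{Bernoulli}(1/2)$ is independent of $X$. Then for every integer $n\ge 0$, \[ \mathbb{E}[\log X]=\frac{1}{(n+6)2^n}\,\mathbb{E}\Big[\log\Big(\prod_{k=1}^{2^n}\big(a_n^kX+b_n^k\big)\Big)\Big]. \]
   Context: $\mathbb{P}^1(\mathbb{R})$ is identified with $\mathbb{R}\cup\{\infty\}$ (with $1/0=\infty$, $1/\infty=0$). The law of such $X$ is unique, atomless, $X\in(0,\infty)$ a.s., and $0<\mathbb{E}[\log X]<\infty$. The integers $a_n^k,b_n^k$ ($n\ge0$, $1\le k\le 2^n$) are defined recursively by $a_0^1=2$, $b_0^1=1$ and, for $n\ge 0$, $(a_{n+1}^k,b_{n+1}^k)=(a_n^k+b_n^k,\ a_n^k)$ for $k=1,\dots,2^n$, and $(a_{n+1}^k,b_{n+1}^k)=(b_n^{k-2^n},\ a_n^{k-2^n})$ for $k=2^n+1,\dots,2^{n+1}$. *)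

theory Defs
  imports "HOL-Probability.Probability"
begin

text \<open>The real projective line P^1(R) = R \<union> {\<infinity>}, represented as real option,
  with None standing for the point \<infinity>.\<close>

definition P1 :: "real option measure" where
  "P1 = sigma UNIV {A. Some -` A \<in> sets (borel :: real measure)}"

fun inv1 :: "real option \<Rightarrow> real option" where
  "inv1 None = Some 0"
| "inv1 (Some x) = (if x = 0 then None else Some (1 / x))"

definition addP1 :: "real option \<Rightarrow> real \<Rightarrow> real option" where
  "addP1 x e = map_option (\<lambda>t. t + e) x"

text \<open>Finite coordinate (the value at \<infinity> is irrelevant: X is finite a.s.).\<close>
definition fin1 :: "real option \<Rightarrow> real" where
  "fin1 x = (case x of None \<Rightarrow> 0 | Some t \<Rightarrow> t)"

fun ab :: "nat \<Rightarrow> nat \<Rightarrow> nat \<times> nat" where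
  "ab 0 k = (2, 1)"
| "ab (Suc n) k =
     (if k \<le> 2 ^ n then (fst (ab n k) + snd (ab n k), fst (ab n k))
      else (snd (ab n (k - 2 ^ n)), fst (ab n (k - 2 ^ n))))"

definition a_seq :: "nat \<Rightarrow> nat \<Rightarrow> nat" where "a_seq n k = fst (ab n k)"
definition b_seq :: "nat \<Rightarrow> nat \<Rightarrow> nat" where "b_seq n k = snd (ab n k)"

end

theory Submission
  imports Defs
begin



lemma sets_P1: "sets P1 = {A. Some -` A \<in> sets (borel :: real measure)}"
proof -
  let ?S = "{A. Some -` A \<in> sets (borel :: real measure)}"
  have sa: "sigma_algebra UNIV ?S"
    unfolding sigma_algebra_iff2
  proof (intro conjI ballI allI impI)
    show "?S \<subseteq> Pow UNIV" by auto
    show "{} \<in> ?S" by simp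
  next
    fix s assume "s \<in> ?S"
    then show "UNIV - s \<in> ?S" by (auto simp: vimage_Diff)
  next
    fix A :: "nat \<Rightarrow> real option set" assume "range A \<subseteq> ?S"
    then show "(\<Union>i. A i) \<in> ?S" by (auto simp: vimage_Union)
  qed
  show ?thesis unfolding P1_def
    by (subst sets_measure_of) (auto simp: sigma_algebra.sigma_sets_eq[OF sa])
qed

lemma space_P1[simp]: "space P1 = UNIV"
  unfolding P1_def by simp

lemma in_sets_P1: "Some -` A \<in> sets borel \<Longrightarrow> A \<in> sets P1"
  by (simp add: sets_P1)

lemma fin1_Some[simp]: "fin1 (Some t) = t" and fin1_None[simp]: "fin1 None = 0"
  by (simp_all add: fin1_def)

lemma fin1_meas[measurable]: "fin1 \<in> borel_measurable P1"
proof (rule measurableI)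
  fix S :: "real set" assume "S \<in> sets borel"
  moreover have "Some -` (fin1 -` S \<inter> space P1) = S" by auto
  ultimately show "fin1 -` S \<inter> space P1 \<in> sets P1" by (intro in_sets_P1) simp
qed simp

lemma measurable_P1I:
  assumes N: "{\<omega>\<in>space M. f \<omega> = None} \<in> sets M"
    and F: "(\<lambda>\<omega>. fin1 (f \<omega>)) \<in> borel_measurable M"
  shows "f \<in> measurable M P1"
proof (rule measurableI)
  fix A assume "A \<in> sets P1"
  then have A: "Some -` A \<in> sets borel" by (simp add: sets_P1)
  have "f -` A \<inter> space M = ({\<omega>\<in>space M. f \<omega> = None} \<inter> (if None \<in> A then UNIV else {}))
      \<union> (({\<omega>\<in>space M. f \<omega> = None} \<union> - {\<omega>\<in>space M. f \<omega> = None}) \<inter> (space M - {\<omega>\<in>space M. f \<omega> = None}) \<inter> ((\<lambda>\<omega>. fin1 (f \<omega>)) -` (Some -` A) \<inter> space M))"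
    by (auto simp: fin1_def split: option.splits)
  also have "\<dots> \<in> sets M"
    using N measurable_sets[OF F A] by (auto intro!: sets.Un sets.Int sets.Diff)
  finally show "f -` A \<inter> space M \<in> sets M" .
qed simp




definition psi :: "real \<Rightarrow> real option \<Rightarrow> real option" where
  "psi c x = addP1 (inv1 x) c"

lemma addP1_0[simp]: "addP1 x 0 = x"
  by (cases x) (auto simp: addP1_def)

lemma psi0: "psi 0 x = inv1 x" by (simp add: psi_def)

lemma fin1_inv1: "fin1 (inv1 x) = 1 / fin1 x"
  by (cases x) auto

lemma psi_None: "psi c x = None \<longleftrightarrow> x = Some 0"
  by (cases x) (auto simp: psi_def addP1_def)

lemma fin1_psi: "fin1 (psi c x) = (if x = Some 0 then 0 else 1 / fin1 x + c)"
  by (cases x) (auto simp: psi_def addP1_def)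

lemma psi_meas[measurable]: "psi c \<in> measurable P1 P1"
proof (rule measurable_P1I)
  have "{\<omega> \<in> space P1. psi c \<omega> = None} = {Some 0}" by (auto simp: psi_None)
  also have "\<dots> \<in> sets P1" by (rule in_sets_P1) (auto simp: vimage_def)
  finally show "{\<omega> \<in> space P1. psi c \<omega> = None} \<in> sets P1" .
  have s0: "{x \<in> space P1. x = Some 0} \<in> sets P1"
    by (rule in_sets_P1) (auto simp: vimage_def)
  show "(\<lambda>\<omega>. fin1 (psi c \<omega>)) \<in> borel_measurable P1"
    unfolding fin1_psi
    by (rule measurable_If) (use s0 in auto)
qed




locale L =
  fixes M :: "'s measure" and X :: "'s \<Rightarrow> real option" and \<epsilon> :: "'s \<Rightarrow> bool"
  assumes ps: "prob_space M"
    and Xm[measurable]: "X \<in> measurable M P1"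
    and em[measurable]: "\<epsilon> \<in> measurable M (count_space UNIV)"
    and dist: "distr M (count_space UNIV) \<epsilon> = measure_pmf (bernoulli_pmf (1/2))"
    and ind: "\<forall>A\<in>sets P1. \<forall>B::bool set.
         measure M ({\<omega>\<in>space M. X \<omega> \<in> A} \<inter> {\<omega>\<in>space M. \<epsilon> \<omega> \<in> B}) =
         measure M {\<omega>\<in>space M. X \<omega> \<in> A} * measure M {\<omega>\<in>space M. \<epsilon> \<omega> \<in> B}"
    and eqd: "distr M P1 X = distr M P1 (\<lambda>\<omega>. addP1 (inv1 (X \<omega>)) (of_bool (\<epsilon> \<omega>)))"
begin

sublocale prob_space M by (rule ps)

lemma h12: "(1/2::ennreal) = ennreal (1/2)" by (simp add: divide_ennreal[symmetric] divide_ennreal_def)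

lemma Eb_sets[measurable]: "{\<omega>\<in>space M. \<epsilon> \<omega> = b} \<in> sets M"
proof -
  have "\<epsilon> -` {b} \<inter> space M \<in> sets M" by (rule measurable_sets[OF em]) simp
  moreover have "\<epsilon> -` {b} \<inter> space M = {\<omega>\<in>space M. \<epsilon> \<omega> = b}" by auto
  ultimately show ?thesis by simp
qed

lemma Pe: "emeasure M {\<omega>\<in>space M. \<epsilon> \<omega> = b} = 1/2"
proof -
  have "emeasure M {\<omega>\<in>space M. \<epsilon> \<omega> = b} = emeasure (distr M (count_space UNIV) \<epsilon>) {b}"
    by (subst emeasure_distr) (auto intro!: arg_cong[where f="emeasure M"])
  also have "\<dots> = 1/2" by (simp add: dist emeasure_pmf_single divide_ennreal_def)
  finally show ?thesis .
qed

lemma indep_em: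
  assumes A: "A \<in> sets P1"
  shows "emeasure M ({\<omega>\<in>space M. X \<omega> \<in> A} \<inter> {\<omega>\<in>space M. \<epsilon> \<omega> = b}) = 1/2 * emeasure M {\<omega>\<in>space M. X \<omega> \<in> A}"
proof -
  have m: "measure M {\<omega>\<in>space M. \<epsilon> \<omega> \<in> {b}} = 1/2"
  proof -
    have "ennreal (measure M {\<omega>\<in>space M. \<epsilon> \<omega> = b}) = ennreal (1/2)"
      using Pe[of b] unfolding emeasure_eq_measure h12 .
    then have "measure M {\<omega>\<in>space M. \<epsilon> \<omega> = b} = 1/2" using ennreal_inj[OF measure_nonneg, of "1/2" M "{\<omega>\<in>space M. \<epsilon> \<omega> = b}"] by linarith
    then show ?thesis by simp
  qed
  have "measure M ({\<omega>\<in>space M. X \<omega> \<in> A} \<inter> {\<omega>\<in>space M. \<epsilon> \<omega> \<in> {b}}) = measure M {\<omega>\<in>space M. X \<omega> \<in> A} * (1/2)"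
    using ind[rule_format, OF A, of "{b}"] unfolding m .
  then have "ennreal (measure M ({\<omega>\<in>space M. X \<omega> \<in> A} \<inter> {\<omega>\<in>space M. \<epsilon> \<omega> = b})) = ennreal (1/2) * ennreal (measure M {\<omega>\<in>space M. X \<omega> \<in> A})"
    by (subst ennreal_mult[symmetric]) (auto simp: mult.commute)
  then show ?thesis unfolding emeasure_eq_measure h12 .
qed

abbreviation "mu \<equiv> distr M P1 X"

lemma indep_nn:
  assumes k[measurable]: "k \<in> borel_measurable P1"
  shows "(\<integral>\<^sup>+\<omega>. indicator {\<omega>\<in>space M. \<epsilon> \<omega> = b} \<omega> * k (X \<omega>) \<partial>M) = 1/2 * (\<integral>\<^sup>+\<omega>. k (X \<omega>) \<partial>M)"
proof -
  let ?E = "{\<omega>\<in>space M. \<epsilon> \<omega> = b}"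
  let ?D1 = "distr (density M (indicator ?E)) P1 X"
  let ?D2 = "density mu (\<lambda>_. 1/2)"
  have eq: "?D1 = ?D2"
  proof (rule measure_eqI)
    show "sets ?D1 = sets ?D2" by simp
    fix A assume "A \<in> sets ?D1"
    then have A[measurable]: "A \<in> sets P1" by simp
    have "emeasure ?D1 A = emeasure (density M (indicator ?E)) (X -` A \<inter> space M)"
      by (subst emeasure_distr) auto
    also have "\<dots> = (\<integral>\<^sup>+\<omega>. indicator ?E \<omega> * indicator (X -` A \<inter> space M) \<omega> \<partial>M)"
      by (rule emeasure_density) auto
    also have "\<dots> = (\<integral>\<^sup>+\<omega>. indicator ({\<omega>\<in>space M. X \<omega> \<in> A} \<inter> ?E) \<omega> \<partial>M)"
      by (rule nn_integral_cong) (auto simp: indicator_def)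
    also have "\<dots> = emeasure M ({\<omega>\<in>space M. X \<omega> \<in> A} \<inter> ?E)"
      by (rule nn_integral_indicator) simp
    also have "\<dots> = 1/2 * emeasure M {\<omega>\<in>space M. X \<omega> \<in> A}" by (rule indep_em[OF A])
    also have "\<dots> = emeasure ?D2 A"
    proof -
      have XA: "X -` A \<inter> space M = {\<omega>\<in>space M. X \<omega> \<in> A}" by auto
      show ?thesis
        by (subst emeasure_density) (auto simp: nn_integral_cmult_indicator emeasure_distr XA)
    qed
    finally show "emeasure ?D1 A = emeasure ?D2 A" .
  qed
  have "(\<integral>\<^sup>+\<omega>. indicator ?E \<omega> * k (X \<omega>) \<partial>M) = (\<integral>\<^sup>+\<omega>. k (X \<omega>) \<partial>density M (indicator ?E))"
    by (subst nn_integral_density) auto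
  also have "\<dots> = (\<integral>\<^sup>+x. k x \<partial>?D1)"
    by (subst nn_integral_distr) auto
  also have "\<dots> = (\<integral>\<^sup>+x. k x \<partial>?D2)" by (simp add: eq)
  also have "\<dots> = (\<integral>\<^sup>+x. 1/2 * k x \<partial>mu)"
    by (subst nn_integral_density) auto
  also have "\<dots> = 1/2 * (\<integral>\<^sup>+x. k x \<partial>mu)"
    by (rule nn_integral_cmult) simp
  also have "\<dots> = 1/2 * (\<integral>\<^sup>+\<omega>. k (X \<omega>) \<partial>M)"
    by (subst nn_integral_distr) auto
  finally show ?thesis .
qed

end


context L begin

lemma phi_eq: "(\<lambda>\<omega>. addP1 (inv1 (X \<omega>)) (of_bool (\<epsilon> \<omega>))) = (\<lambda>\<omega>. if \<epsilon> \<omega> then psi 1 (X \<omega>) else psi 0 (X \<omega>))"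
  by (auto simp: psi_def fun_eq_iff)

lemma ET[measurable]: "{\<omega>\<in>space M. \<epsilon> \<omega>} \<in> sets M"
  using Eb_sets[of True] by simp

lemma phi_meas[measurable]: "(\<lambda>\<omega>. addP1 (inv1 (X \<omega>)) (of_bool (\<epsilon> \<omega>))) \<in> measurable M P1"
  unfolding phi_eq by (rule measurable_If) auto

lemma mixP1:
  assumes g[measurable]: "g \<in> borel_measurable P1"
  shows "(\<integral>\<^sup>+x. g x \<partial>mu) = 1/2 * (\<integral>\<^sup>+x. g (psi 1 x) \<partial>mu) + 1/2 * (\<integral>\<^sup>+x. g (psi 0 x) \<partial>mu)"
proof -
  have "(\<integral>\<^sup>+x. g x \<partial>mu) = (\<integral>\<^sup>+x. g x \<partial>distr M P1 (\<lambda>\<omega>. addP1 (inv1 (X \<omega>)) (of_bool (\<epsilon> \<omega>))))"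
    by (simp add: eqd)
  also have "\<dots> = (\<integral>\<^sup>+\<omega>. g (addP1 (inv1 (X \<omega>)) (of_bool (\<epsilon> \<omega>))) \<partial>M)"
    by (rule nn_integral_distr) auto
  also have "\<dots> = (\<integral>\<^sup>+\<omega>. indicator {\<omega>\<in>space M. \<epsilon> \<omega> = True} \<omega> * g (psi 1 (X \<omega>))
        + indicator {\<omega>\<in>space M. \<epsilon> \<omega> = False} \<omega> * g (psi 0 (X \<omega>)) \<partial>M)"
    by (rule nn_integral_cong) (auto simp: psi_def indicator_def)
  also have "\<dots> = (\<integral>\<^sup>+\<omega>. indicator {\<omega>\<in>space M. \<epsilon> \<omega> = True} \<omega> * g (psi 1 (X \<omega>)) \<partial>M)
        + (\<integral>\<^sup>+\<omega>. indicator {\<omega>\<in>space M. \<epsilon> \<omega> = False} \<omega> * g (psi 0 (X \<omega>)) \<partial>M)"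
    by (rule nn_integral_add) auto
  also have "\<dots> = 1/2 * (\<integral>\<^sup>+\<omega>. g (psi 1 (X \<omega>)) \<partial>M) + 1/2 * (\<integral>\<^sup>+\<omega>. g (psi 0 (X \<omega>)) \<partial>M)"
    by (subst (1 2) indep_nn[where k="\<lambda>x. g (psi _ x)"]) auto
  also have "\<dots> = 1/2 * (\<integral>\<^sup>+x. g (psi 1 x) \<partial>mu) + 1/2 * (\<integral>\<^sup>+x. g (psi 0 x) \<partial>mu)"
    by (subst (1 2) nn_integral_distr) auto
  finally show ?thesis .
qed

end



definition pos :: "real option \<Rightarrow> bool" where
  "pos x = (case x of None \<Rightarrow> False | Some t \<Rightarrow> 0 < t)"

definition "BB = {x. \<not> pos x}"
definition CC :: "real option set" where "CC = {x. \<exists>t. x = Some t \<and> -1 \<le> t \<and> t \<le> 0}"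
definition "NN = {Some (-1::real)}"

lemma BB_sets[measurable]: "BB \<in> sets P1"
proof (rule in_sets_P1)
  have "Some -` BB = {..0}" by (auto simp: BB_def pos_def)
  then show "Some -` BB \<in> sets borel" by simp
qed
lemma CC_sets[measurable]: "CC \<in> sets P1"
proof (rule in_sets_P1)
  have "Some -` CC = {-1..0}" by (auto simp: CC_def)
  then show "Some -` CC \<in> sets borel" by (simp add: borel_closed)
qed
lemma NN_sets[measurable]: "NN \<in> sets P1"
proof (rule in_sets_P1)
  have "Some -` NN = {-1}" by (auto simp: NN_def)
  then show "Some -` NN \<in> sets borel" by (simp add: borel_closed)
qed

lemma inv_le_m1: "(t::real) \<noteq> 0 \<Longrightarrow> 1/t \<le> -1 \<Longrightarrow> -1 \<le> t \<and> t < 0"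
proof -
  assume t: "t \<noteq> 0" and h: "1/t \<le> -1"
  have "t < 0"
  proof (rule ccontr)
    assume "\<not> t < 0" then have "t > 0" using t by simp
    then have "1/t > 0" by simp
    with h show False by simp
  qed
  moreover have "-1 \<le> t" using h \<open>t<0\<close> by (simp add: divide_le_eq)
  ultimately show ?thesis by simp
qed

lemma sub1: "psi 0 -` BB \<subseteq> BB"
  by (auto simp: BB_def pos_def psi0 split: option.splits if_splits)
lemma sub2: "psi 1 -` BB \<subseteq> CC"
proof
  fix x assume "x \<in> psi 1 -` BB"
  then have h: "\<not> pos (psi 1 x)" by (simp add: BB_def)
  show "x \<in> CC"
  proof (cases x)
    case None then show ?thesis using h by (simp add: psi_def addP1_def pos_def)
  next
    case (Some t)
    show ?thesis
    proof (cases "t = 0")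
      case True then show ?thesis using Some by (simp add: CC_def)
    next
      case False
      then have "1/t + 1 \<le> 0" using h Some by (simp add: psi_def addP1_def pos_def)
      then have "1/t \<le> -1" by simp
      from inv_le_m1[OF False this] show ?thesis using Some by (simp add: CC_def)
    qed
  qed
qed
lemma sub3: "CC \<subseteq> BB" by (auto simp: CC_def BB_def pos_def)
lemma sub4: "psi 0 -` CC \<subseteq> (BB - CC) \<union> NN"
proof
  fix x assume "x \<in> psi 0 -` CC"
  then have h: "inv1 x \<in> CC" by (simp add: psi0)
  show "x \<in> (BB - CC) \<union> NN"
  proof (cases x)
    case None then show ?thesis by (simp add: BB_def CC_def pos_def)
  next
    case (Some t)
    show ?thesis
    proof (cases "t = 0")
      case True then show ?thesis using Some h by (simp add: CC_def)
    next
      case False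
      then have "-1 \<le> 1/t" "1/t \<le> 0" using h Some by (auto simp: CC_def)
      then have "t < 0" using False by (simp add: divide_le_0_1_iff order_le_less)
      then have "t \<le> -1" using \<open>-1 \<le> 1/t\<close> by (simp add: le_divide_eq)
      then show ?thesis using Some by (cases "t = -1") (auto simp: BB_def CC_def NN_def pos_def)
    qed
  qed
qed
lemma sub5: "psi 1 -` CC \<subseteq> CC"
proof
  fix x assume "x \<in> psi 1 -` CC"
  then have h: "psi 1 x \<in> CC" by simp
  show "x \<in> CC"
  proof (cases x)
    case None then show ?thesis using h by (simp add: CC_def psi_def addP1_def)
  next
    case (Some t)
    show ?thesis
    proof (cases "t = 0")
      case True then show ?thesis using Some h by (simp add: CC_def)
    next
      case False
      then have "1/t + 1 \<le> 0" using h Some by (auto simp: CC_def psi_def addP1_def)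
      then have "1/t \<le> -1" by simp
      from inv_le_m1[OF False this] show ?thesis using Some by (simp add: CC_def)
    qed
  qed
qed
lemma sub6: "psi 1 -` NN \<subseteq> CC - NN"
proof
  fix x assume "x \<in> psi 1 -` NN"
  then have h: "psi 1 x = Some (-1)" by (simp add: NN_def)
  then obtain t where t: "x = Some t" "t \<noteq> 0" "1/t + 1 = -1"
    by (cases x) (auto simp: psi_def addP1_def split: if_splits)
  then have "1/t = -2" by simp
  then have "1 = -2 * t" using t(2) by (simp add: divide_eq_eq)
  then have "t = -1/2" by linarith
  then show "x \<in> CC - NN" using t by (auto simp: CC_def NN_def)
qed
lemma sub7: "psi 0 -` NN \<subseteq> NN"
proof
  fix x assume "x \<in> psi 0 -` NN"
  then have h: "inv1 x = Some (-1)" by (simp add: NN_def psi0)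
  then obtain t where t: "x = Some t" "t \<noteq> 0" "1/t = -1"
    by (cases x) (auto split: if_splits)
  then have "1 = - t" using t(2) by (simp add: divide_eq_eq)
  then have "t = -1" by linarith
  then show "x \<in> NN" using t by (auto simp: NN_def)
qed



context L begin

lemma mu_prob: "prob_space mu" by (rule prob_space_distr) simp

lemma mix_meas:
  assumes A[measurable]: "A \<in> sets P1"
  shows "measure mu A = 1/2 * measure mu (psi 1 -` A) + 1/2 * measure mu (psi 0 -` A)"
proof -
  interpret Mu: prob_space mu by (rule mu_prob)
  have S: "psi c -` A \<in> sets P1" for c
    using measurable_sets[OF psi_meas A, of c] by simp
  have i: "(\<integral>\<^sup>+x. indicator A (psi c x) \<partial>mu) = emeasure mu (psi c -` A)" for c
  proof -
    have "(\<integral>\<^sup>+x. indicator A (psi c x) \<partial>mu) = (\<integral>\<^sup>+x. indicator (psi c -` A) x \<partial>mu)"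
      by (rule nn_integral_cong) (simp split: split_indicator)
    also have "\<dots> = emeasure mu (psi c -` A)" using S by (intro nn_integral_indicator) simp
    finally show ?thesis .
  qed
  have "emeasure mu A = (\<integral>\<^sup>+x. indicator A x \<partial>mu)" using A by (intro nn_integral_indicator[symmetric]) simp
  also have "\<dots> = 1/2 * emeasure mu (psi 1 -` A) + 1/2 * emeasure mu (psi 0 -` A)"
    by (subst mixP1) (auto simp: i)
  finally have e: "ennreal (measure mu A) = ennreal (1/2) * ennreal (measure mu (psi 1 -` A)) + ennreal (1/2) * ennreal (measure mu (psi 0 -` A))"
    unfolding Mu.emeasure_eq_measure h12 .
  also have "\<dots> = ennreal (1/2 * measure mu (psi 1 -` A) + 1/2 * measure mu (psi 0 -` A))"
  proof -
    have p1: "ennreal (1/2 * measure mu (psi 1 -` A) + 1/2 * measure mu (psi 0 -` A)) = ennreal (1/2 * measure mu (psi 1 -` A)) + ennreal (1/2 * measure mu (psi 0 -` A))"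
      by (rule ennreal_plus) auto
    have p2: "ennreal (1/2 * a) = ennreal (1/2) * ennreal a" if "0 \<le> a" for a :: real
      by (rule ennreal_mult) (use that in auto)
    show ?thesis unfolding p1 p2[OF measure_nonneg] ..
  qed
  finally show ?thesis by (subst (asm) ennreal_inj) auto
qed

lemma AE_pos: "AE x in mu. pos x"
proof -
  interpret Mu: prob_space mu by (rule mu_prob)
  let ?m = "measure mu"
  have m1: "?m BB \<le> ?m CC"
  proof -
    have "?m BB = 1/2 * ?m (psi 1 -` BB) + 1/2 * ?m (psi 0 -` BB)" by (rule mix_meas) simp
    also have "\<dots> \<le> 1/2 * ?m CC + 1/2 * ?m BB"
      using Mu.finite_measure_mono[OF sub1] Mu.finite_measure_mono[OF sub2] by simp
    finally show ?thesis by simp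
  qed
  have d1: "?m (BB - CC) = 0"
    using Mu.finite_measure_Diff[of BB CC] sub3 m1 Mu.finite_measure_mono[OF sub3] by simp
  have m2: "?m CC \<le> ?m NN"
  proof -
    have "?m (psi 0 -` CC) \<le> ?m ((BB - CC) \<union> NN)"
      by (rule Mu.finite_measure_mono[OF sub4]) simp
    also have "\<dots> \<le> ?m (BB - CC) + ?m NN" by (rule measure_Un_le) auto
    finally have a: "?m (psi 0 -` CC) \<le> ?m NN" using d1 by simp
    have "?m CC = 1/2 * ?m (psi 1 -` CC) + 1/2 * ?m (psi 0 -` CC)" by (rule mix_meas) simp
    also have "\<dots> \<le> 1/2 * ?m CC + 1/2 * ?m NN"
      using Mu.finite_measure_mono[OF sub5] a by simp
    finally show ?thesis by simp
  qed
  have NC: "NN \<subseteq> CC" by (auto simp: NN_def CC_def)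
  have d2: "?m (CC - NN) = 0"
    using Mu.finite_measure_Diff[of CC NN] NC m2 Mu.finite_measure_mono[OF NC] by simp
  have m3: "?m NN = 0"
  proof -
    have "?m NN = 1/2 * ?m (psi 1 -` NN) + 1/2 * ?m (psi 0 -` NN)" by (rule mix_meas) simp
    also have "\<dots> \<le> 1/2 * ?m (CC - NN) + 1/2 * ?m NN"
      using Mu.finite_measure_mono[OF sub6] Mu.finite_measure_mono[OF sub7] by simp
    finally show ?thesis using d2 measure_nonneg[of mu NN] by simp
  qed
  have "?m BB = 0" using m1 m2 m3 measure_nonneg[of mu BB] by linarith
  then have "BB \<in> null_sets mu" by (simp add: Mu.emeasure_eq_measure null_sets_def)
  then show ?thesis by (rule AE_I') (auto simp: BB_def)
qed

end


context L begin

abbreviation "nu \<equiv> distr mu borel fin1"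

lemma nu_prob: "prob_space nu"
  using mu_prob by (rule prob_space.prob_space_distr) simp

lemma AE_nu_pos: "AE x in nu. 0 < x"
proof -
  have "AE x in mu. 0 < fin1 x"
    using AE_pos by eventually_elim (auto simp: pos_def split: option.splits)
  then show ?thesis by (subst AE_distr_iff) auto
qed

lemma mix_nn:
  assumes g[measurable]: "g \<in> borel_measurable (borel :: real measure)"
  shows "(\<integral>\<^sup>+x. g x \<partial>nu) = 1/2 * (\<integral>\<^sup>+x. g (1/x + 1) \<partial>nu) + 1/2 * (\<integral>\<^sup>+x. g (1/x) \<partial>nu)"
proof -
  have "(\<integral>\<^sup>+x. g x \<partial>nu) = (\<integral>\<^sup>+x. g (fin1 x) \<partial>mu)" by (rule nn_integral_distr) auto
  also have "\<dots> = 1/2 * (\<integral>\<^sup>+x. g (fin1 (psi 1 x)) \<partial>mu) + 1/2 * (\<integral>\<^sup>+x. g (fin1 (psi 0 x)) \<partial>mu)"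
    by (rule mixP1) simp
  also have "(\<integral>\<^sup>+x. g (fin1 (psi 1 x)) \<partial>mu) = (\<integral>\<^sup>+x. g (1 / fin1 x + 1) \<partial>mu)"
    by (rule nn_integral_cong_AE, use AE_pos in eventually_elim)
       (auto simp: fin1_psi pos_def split: option.splits)
  also have "(\<integral>\<^sup>+x. g (fin1 (psi 0 x)) \<partial>mu) = (\<integral>\<^sup>+x. g (1 / fin1 x) \<partial>mu)"
    by (rule nn_integral_cong) (simp add: fin1_psi)
  also have "(\<integral>\<^sup>+x. g (1 / fin1 x + 1) \<partial>mu) = (\<integral>\<^sup>+x. g (1/x + 1) \<partial>nu)"
    by (rule nn_integral_distr[symmetric]) auto
  also have "(\<integral>\<^sup>+x. g (1 / fin1 x) \<partial>mu) = (\<integral>\<^sup>+x. g (1/x) \<partial>nu)"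
    by (rule nn_integral_distr[symmetric]) auto
  finally show ?thesis .
qed

lemma mix_real:
  fixes g :: "real \<Rightarrow> real"
  assumes i: "integrable nu g" "integrable nu (\<lambda>x. g (1/x + 1))" "integrable nu (\<lambda>x. g (1/x))"
  shows "integral\<^sup>L nu g = 1/2 * integral\<^sup>L nu (\<lambda>x. g (1/x + 1)) + 1/2 * integral\<^sup>L nu (\<lambda>x. g (1/x))"
proof -
  have gm[measurable]: "g \<in> borel_measurable borel" using i(1) by simp
  let ?P = "\<lambda>f. (\<integral>\<^sup>+x. ennreal (f x) \<partial>nu)"
  let ?N = "\<lambda>f. (\<integral>\<^sup>+x. ennreal (- f x) \<partial>nu)"
  have fin: "?P f < top" "?N f < top" if "integrable nu f" for f :: "real \<Rightarrow> real"
    using that unfolding real_integrable_def by (auto simp: less_top)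
  have e: "enn2real (1/2 * a + 1/2 * b) = 1/2 * enn2real a + 1/2 * enn2real b" if "a < top" "b < top" for a b :: ennreal
  proof -
    have "enn2real (1/2 * a + 1/2 * b) = enn2real (1/2 * a) + enn2real (1/2 * b)"
    proof -
      have t: "(1/2::ennreal) < top" using h12 ennreal_less_top by metis
      show ?thesis using that t by (intro enn2real_plus) (auto simp: ennreal_mult_less_top)
    qed
    also have "\<dots> = 1/2 * enn2real a + 1/2 * enn2real b"
    proof -
      have hh: "enn2real (1/2::ennreal) = 1/2" unfolding h12 by (rule enn2real_ennreal) simp
      show ?thesis unfolding enn2real_mult hh by (rule refl)
    qed
    finally show ?thesis .
  qed
  have P: "?P g = 1/2 * ?P (\<lambda>x. g (1/x + 1)) + 1/2 * ?P (\<lambda>x. g (1/x))"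
    by (rule mix_nn) simp
  have N: "?N g = 1/2 * ?N (\<lambda>x. g (1/x + 1)) + 1/2 * ?N (\<lambda>x. g (1/x))"
    by (rule mix_nn) simp
  show ?thesis
    unfolding real_lebesgue_integral_def[OF i(1)] real_lebesgue_integral_def[OF i(2)] real_lebesgue_integral_def[OF i(3)]
    unfolding P N
    using e[OF fin(1)[OF i(2)] fin(1)[OF i(3)]] e[OF fin(2)[OF i(2)] fin(2)[OF i(3)]]
    by (simp add: algebra_simps)
qed

end



lemma integrable_from_trunc:
  fixes f :: "'a \<Rightarrow> real"
  assumes N: "prob_space N" and fm[measurable]: "f \<in> borel_measurable N"
    and nn: "AE x in N. 0 \<le> f x"
    and b: "\<And>n::nat. integral\<^sup>L N (\<lambda>x. min (f x) (real n)) \<le> C"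
  shows "integrable N f"
proof -
  interpret prob_space N by (rule N)
  have ii: "integrable N (\<lambda>x. min (f x) (real n))" for n :: nat
  proof (rule integrable_const_bound[where B="real n"])
    show "AE x in N. norm (min (f x) (real n)) \<le> real n" using nn by eventually_elim auto
  qed simp
  let ?F = "\<lambda>i x. ennreal (min (f x) (real i))"
  have lim: "(\<lambda>n. integral\<^sup>N N (?F n)) \<longlonglongrightarrow> (\<integral>\<^sup>+x. ennreal (f x) \<partial>N)"
  proof (rule nn_integral_LIMSEQ)
    show "incseq ?F"
      unfolding incseq_def le_fun_def by (intro allI impI ennreal_leI min.mono) auto
    show "?F i \<in> borel_measurable N" for i by simp
    fix x
    have "eventually (\<lambda>i. min (f x) (real i) = f x) sequentially"
      unfolding eventually_sequentially
    proof (intro exI allI impI)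
      fix i assume "nat \<lceil>f x\<rceil> \<le> i"
      have "f x \<le> real (nat \<lceil>f x\<rceil>)" by (rule real_nat_ceiling_ge)
      also have "\<dots> \<le> real i" using \<open>nat \<lceil>f x\<rceil> \<le> i\<close> by simp
      finally show "min (f x) (real i) = f x" by simp
    qed
    then have "(\<lambda>i. min (f x) (real i)) \<longlonglongrightarrow> f x" by (rule tendsto_eventually)
    then show "(\<lambda>i. ?F i x) \<longlonglongrightarrow> ennreal (f x)" by (rule tendsto_ennrealI)
  qed
  have le: "integral\<^sup>N N (?F n) \<le> ennreal C" for n
  proof -
    have "integral\<^sup>N N (?F n) = ennreal (integral\<^sup>L N (\<lambda>x. min (f x) (real n)))"
      by (rule nn_integral_eq_integral[OF ii]) (use nn in eventually_elim, simp)
    also have "\<dots> \<le> ennreal C" by (rule ennreal_leI[OF b])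
    finally show ?thesis .
  qed
  have "(\<integral>\<^sup>+x. ennreal (f x) \<partial>N) \<le> ennreal C"
    by (rule LIMSEQ_le_const2[OF lim]) (use le in auto)
  then have "(\<integral>\<^sup>+x. ennreal (f x) \<partial>N) < \<infinity>"
    by (rule le_less_trans) simp
  then show ?thesis by (intro integrableI_nonneg fm nn)
qed

context L begin

lemma moments: "integrable nu (\<lambda>x. x)" "integrable nu (\<lambda>x. 1/x)"
proof -
  interpret Nu: prob_space nu by (rule nu_prob)
  have pos: "AE x in nu. 0 < x" by (rule AE_nu_pos)
  have pu: "measure nu UNIV = 1" using Nu.prob_space by simp
  have bd: "integrable nu (\<lambda>x. min (k x) (real n))" if "\<And>x. 0 < x \<Longrightarrow> 0 \<le> k x" "k \<in> borel_measurable borel" for k n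
  proof (rule Nu.integrable_const_bound[where B="real n"])
    show "AE x in nu. norm (min (k x) (real n)) \<le> real n" using pos by eventually_elim (use that in auto)
  qed (use that in simp)
  have ab: "integral\<^sup>L nu (\<lambda>x. min x (real n)) \<le> 2 \<and> integral\<^sup>L nu (\<lambda>x. min (1/x) (real n)) \<le> 3/2" for n
  proof -
    let ?a = "integral\<^sup>L nu (\<lambda>x. min x (real n))"
    let ?b = "integral\<^sup>L nu (\<lambda>x. min (1/x) (real n))"
    have i1: "integrable nu (\<lambda>x. min x (real n))" by (rule bd) auto
    have i2: "integrable nu (\<lambda>x. min (1/x) (real n))" by (rule bd) auto
    have i3: "integrable nu (\<lambda>x. min (1/x + 1) (real n))" by (rule bd) auto
    have i4: "integrable nu (\<lambda>x. min (1/(1/x + 1)) (real n))" by (rule bd) auto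
    have i5: "integrable nu (\<lambda>x. min (1/(1/x)) (real n))" using i1 by simp
    have ea: "?a = 1/2 * integral\<^sup>L nu (\<lambda>x. min (1/x + 1) (real n)) + 1/2 * ?b"
      using mix_real[where g="\<lambda>x. min x (real n)", OF i1 i3 i2] by simp
    have "integral\<^sup>L nu (\<lambda>x. min (1/x + 1) (real n)) \<le> integral\<^sup>L nu (\<lambda>x. 1 + min (1/x) (real n))"
      by (rule integral_mono) (use i2 i3 in auto)
    also have "\<dots> = 1 + ?b" using i2 by (simp add: pu)
    finally have a2: "?a \<le> 1/2 + ?b" using ea by simp
    have eb: "?b = 1/2 * integral\<^sup>L nu (\<lambda>x. min (1/(1/x + 1)) (real n)) + 1/2 * ?a"
      using mix_real[where g="\<lambda>x. min (1/x) (real n)", OF i2 i4 i5] by simp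
    have "integral\<^sup>L nu (\<lambda>x. min (1/(1/x + 1)) (real n)) \<le> integral\<^sup>L nu (\<lambda>x. 1)"
    proof (rule integral_mono_AE)
      show "AE x in nu. min (1/(1/x + 1)) (real n) \<le> 1"
        using pos
      proof eventually_elim
        fix x :: real assume "0 < x"
        then have "1 \<le> 1/x + 1" by simp
        have gen: "1/y \<le> 1" if "(1::real) \<le> y" for y using that by simp
        have "1/(1/x + 1) \<le> 1" by (rule gen) fact
        then show "min (1/(1/x + 1)) (real n) \<le> 1" by simp
      qed
    qed (use i4 in auto)
    then have b2: "?b \<le> 1/2 + 1/2 * ?a" using eb by (simp add: pu)
    from a2 b2 show ?thesis by linarith
  qed
  show "integrable nu (\<lambda>x. x)"
    by (rule integrable_from_trunc[OF nu_prob, where C=2]) (use pos ab in auto)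
  show "integrable nu (\<lambda>x. 1/x)"
    by (rule integrable_from_trunc[OF nu_prob, where C="3/2"]) (use pos ab in auto)
qed

end



lemma ab_ge1: "1 \<le> fst (ab n k) \<and> 1 \<le> snd (ab n k)"
proof (induction n arbitrary: k)
  case 0 then show ?case by simp
next
  case (Suc n)
  have "1 \<le> fst (ab n k) \<and> 1 \<le> snd (ab n k)" "1 \<le> fst (ab n (k - 2^n)) \<and> 1 \<le> snd (ab n (k - 2^n))"
    using Suc.IH by blast+
  then show ?case by auto
qed

context L begin

lemma int_ln: "integrable nu ln"
proof (rule Bochner_Integration.integrable_bound)
  show "integrable nu (\<lambda>x. x + 1/x)" using moments by (rule Bochner_Integration.integrable_add)
  show "AE x in nu. norm (ln x) \<le> norm (x + 1/x)"
    using AE_nu_pos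
  proof eventually_elim
    fix x :: real assume x: "0 < x"
    have "ln x \<le> x - 1" using x by (rule ln_le_minus_one)
    moreover have "ln (1/x) \<le> 1/x - 1" using x by (intro ln_le_minus_one) simp
    moreover have "ln (1/x) = - ln x" using x by (simp add: ln_div)
    moreover have "0 < 1/x" using x by simp
    ultimately have "ln x \<le> x + 1/x" "- ln x \<le> x + 1/x" using x by linarith+
    then have "\<bar>ln x\<bar> \<le> x + 1/x" by (simp add: abs_le_iff)
    moreover have "\<bar>x + 1/x\<bar> = x + 1/x" using x by simp
    ultimately show "norm (ln x) \<le> norm (x + 1/x)" by simp
  qed
qed simp

lemma int_lnab:
  assumes a: "0 \<le> a" and b: "1 \<le> b"
  shows "integrable nu (\<lambda>x. ln (a * x + b))"
proof (rule Bochner_Integration.integrable_bound)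
  interpret Nu: prob_space nu by (rule nu_prob)
  show "integrable nu (\<lambda>x. a * x + b)"
    using moments(1) by (intro Bochner_Integration.integrable_add integrable_mult_right) auto
  show "AE x in nu. norm (ln (a * x + b)) \<le> norm (a * x + b)"
    using AE_nu_pos
  proof eventually_elim
    fix x :: real assume x: "0 < x"
    have y: "1 \<le> a * x + b" using a b x by (simp add: add_increasing)
    have "ln (a * x + b) \<le> a * x + b - 1" using y by (intro ln_le_minus_one) simp
    moreover have "0 \<le> ln (a * x + b)" using y by simp
    ultimately show "norm (ln (a * x + b)) \<le> norm (a * x + b)" using y by auto
  qed
qed simp

definition "fab a b = integral\<^sup>L nu (\<lambda>x. ln (a * x + b))"
definition "LL = integral\<^sup>L nu ln"

lemma rec:
  assumes a: "1 \<le> a" and b: "1 \<le> b"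
  shows "fab a b = 1/2 * fab (a + b) a + 1/2 * fab b a - LL"
proof -
  have e1: "AE x in nu. ln (a * (1/x + 1) + b) = ln ((a + b) * x + a) - ln x"
    using AE_nu_pos
  proof eventually_elim
    fix x :: real assume x: "0 < x"
    have "a * (1/x + 1) + b = ((a + b) * x + a) / x" using x by (simp add: field_simps)
    moreover have "0 < (a + b) * x + a" using a b x by (simp add: add_pos_pos)
    ultimately show "ln (a * (1/x + 1) + b) = ln ((a + b) * x + a) - ln x" using x by (simp add: ln_div)
  qed
  have e0: "AE x in nu. ln (a * (1/x) + b) = ln (b * x + a) - ln x"
    using AE_nu_pos
  proof eventually_elim
    fix x :: real assume x: "0 < x"
    have "a * (1/x) + b = (b * x + a) / x" using x by (simp add: field_simps)
    moreover have "0 < b * x + a" using a b x by (simp add: add_pos_pos)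
    ultimately show "ln (a * (1/x) + b) = ln (b * x + a) - ln x" using x by (simp add: ln_div)
  qed
  have i1: "integrable nu (\<lambda>x. ln ((a + b) * x + a) - ln x)"
    using int_lnab[of "a + b" a] int_ln a b by (intro Bochner_Integration.integrable_diff) auto
  have i0: "integrable nu (\<lambda>x. ln (b * x + a) - ln x)"
    using int_lnab[of b a] int_ln a b by (intro Bochner_Integration.integrable_diff) auto
  have j1: "integrable nu (\<lambda>x. ln (a * (1/x + 1) + b))"
  proof (rule integrable_cong_AE_imp[OF i1])
    show "AE x in nu. ln ((a + b) * x + a) - ln x = ln (a * (1/x + 1) + b)" using e1 by eventually_elim (rule sym)
  qed simp
  have j0: "integrable nu (\<lambda>x. ln (a * (1/x) + b))"
  proof (rule integrable_cong_AE_imp[OF i0])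
    show "AE x in nu. ln (b * x + a) - ln x = ln (a * (1/x) + b)" using e0 by eventually_elim (rule sym)
  qed simp
  have "fab a b = 1/2 * integral\<^sup>L nu (\<lambda>x. ln (a * (1/x + 1) + b)) + 1/2 * integral\<^sup>L nu (\<lambda>x. ln (a * (1/x) + b))"
    unfolding fab_def
    by (rule mix_real[where g="\<lambda>x. ln (a * x + b)", OF int_lnab[OF _ b] j1 j0]) (use a in simp)
  also have "integral\<^sup>L nu (\<lambda>x. ln (a * (1/x + 1) + b)) = integral\<^sup>L nu (\<lambda>x. ln ((a + b) * x + a) - ln x)"
    by (rule integral_cong_AE) (use e1 in auto)
  also have "\<dots> = fab (a + b) a - LL"
    unfolding fab_def LL_def using int_lnab[of "a + b" a] int_ln a b by (intro Bochner_Integration.integral_diff) auto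
  also have "integral\<^sup>L nu (\<lambda>x. ln (a * (1/x) + b)) = integral\<^sup>L nu (\<lambda>x. ln (b * x + a) - ln x)"
    by (rule integral_cong_AE) (use e0 in auto)
  also have "\<dots> = fab b a - LL"
    unfolding fab_def LL_def using int_lnab[of b a] int_ln a b by (intro Bochner_Integration.integral_diff) auto
  finally show ?thesis by (simp add: algebra_simps)
qed

lemma f11: "fab 1 1 = 4 * LL"
proof -
  have e1: "AE x in nu. ln (1/x + 1) = ln (1 * x + 1) - ln x"
    using AE_nu_pos
  proof eventually_elim
    fix x :: real assume x: "0 < x"
    have "1/x + 1 = (1 * x + 1) / x" using x by (simp add: field_simps)
    moreover have "0 < 1 * x + 1" using x by simp
    ultimately show "ln (1/x + 1) = ln (1 * x + 1) - ln x" using x by (simp add: ln_div)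
  qed
  have e0: "AE x in nu. ln (1/x) = - ln x"
    using AE_nu_pos by eventually_elim (simp add: ln_div)
  have i1: "integrable nu (\<lambda>x. ln (1 * x + 1) - ln x)"
    using int_lnab[of 1 1] int_ln by (intro Bochner_Integration.integrable_diff) auto
  have j1: "integrable nu (\<lambda>x. ln (1/x + 1))"
  proof (rule integrable_cong_AE_imp[OF i1])
    show "AE x in nu. ln (1 * x + 1) - ln x = ln (1/x + 1)" using e1 by eventually_elim (rule sym)
  qed simp
  have j0: "integrable nu (\<lambda>x. ln (1/x))"
  proof (rule integrable_cong_AE_imp[OF Bochner_Integration.integrable_minus[OF int_ln]])
    show "AE x in nu. - ln x = ln (1/x)" using e0 by eventually_elim (rule sym)
  qed simp
  have "LL = 1/2 * integral\<^sup>L nu (\<lambda>x. ln (1/x + 1)) + 1/2 * integral\<^sup>L nu (\<lambda>x. ln (1/x))"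
    unfolding LL_def by (rule mix_real[where g=ln, OF int_ln j1 j0])
  also have "integral\<^sup>L nu (\<lambda>x. ln (1/x + 1)) = integral\<^sup>L nu (\<lambda>x. ln (1 * x + 1) - ln x)"
    by (rule integral_cong_AE) (use e1 in auto)
  also have "\<dots> = fab 1 1 - LL"
    unfolding fab_def LL_def using int_lnab[of 1 1] int_ln by (intro Bochner_Integration.integral_diff) auto
  also have "integral\<^sup>L nu (\<lambda>x. ln (1/x)) = integral\<^sup>L nu (\<lambda>x. - ln x)"
    by (rule integral_cong_AE) (use e0 in auto)
  also have "\<dots> = - LL" unfolding LL_def by simp
  finally have hh: "LL = 1 / 2 * (fab 1 1 - LL) + 1 / 2 * - LL" .
  show ?thesis using hh by (simp add: field_simps)
qed

lemma f21: "fab 2 1 = 6 * LL"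
  using rec[of 1 1] f11 by simp

end


context L begin

definition "S n = (\<Sum>k\<in>{1..2^n}. fab (real (a_seq n k)) (real (b_seq n k)))"

lemma S_closed: "S n = (real n + 6) * 2^n * LL"
proof (induction n)
  case 0
  have "S 0 = fab 2 1" by (simp add: S_def a_seq_def b_seq_def)
  then show ?case using f21 by simp
next
  case (Suc n)
  let ?F = "\<lambda>k. fab (real (a_seq (Suc n) k)) (real (b_seq (Suc n) k))"
  have split: "{1..2^Suc n} = {1..2^n} \<union> {2^n+1..2^n+2^n::nat}" by auto
  have "S (Suc n) = sum ?F {1..2^n} + sum ?F {1+2^n..2^n+2^n}"
    unfolding S_def split by (subst sum.union_disjoint) (auto simp: add.commute)
  also have "sum ?F {1+2^n..2^n+2^n} = (\<Sum>j\<in>{1..2^n}. ?F (j + 2^n))"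
    by (rule sum.shift_bounds_cl_nat_ivl)
  also have "sum ?F {1..2^n} + (\<Sum>j\<in>{1..2^n}. ?F (j + 2^n))
      = (\<Sum>j\<in>{1..2^n}. 2 * fab (real (a_seq n j)) (real (b_seq n j)) + 2 * LL)"
    unfolding sum.distrib[symmetric]
  proof (rule sum.cong[OF refl])
    fix j assume j: "j \<in> {1..2^n::nat}"
    have g: "1 \<le> fst (ab n j)" "1 \<le> snd (ab n j)" using ab_ge1[of n j] by auto
    have r: "fab (real (fst (ab n j)) + real (snd (ab n j))) (real (fst (ab n j))) + fab (real (snd (ab n j))) (real (fst (ab n j)))
        = 2 * fab (real (fst (ab n j))) (real (snd (ab n j))) + 2 * LL"
      using rec[of "real (fst (ab n j))" "real (snd (ab n j))"] g by simp
    show "?F j + ?F (j + 2^n) = 2 * fab (real (a_seq n j)) (real (b_seq n j)) + 2 * LL"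
      using j r by (simp add: a_seq_def b_seq_def)
  qed
  also have "\<dots> = 2 * S n + 2^Suc n * LL"
    by (simp add: S_def sum.distrib sum_distrib_left)
  finally show ?case using Suc.IH by (simp add: algebra_simps)
qed

lemma transfer:
  fixes h :: "real \<Rightarrow> real"
  assumes h[measurable]: "h \<in> borel_measurable borel"
  shows "integral\<^sup>L M (\<lambda>\<omega>. h (fin1 (X \<omega>))) = integral\<^sup>L nu h"
proof -
  have "integral\<^sup>L nu h = integral\<^sup>L mu (\<lambda>x. h (fin1 x))" by (rule integral_distr) auto
  also have "\<dots> = integral\<^sup>L M (\<lambda>\<omega>. h (fin1 (X \<omega>)))" by (rule integral_distr) auto
  finally show ?thesis by simp
qed

lemma main:
  "integral\<^sup>L M (\<lambda>\<omega>. ln (fin1 (X \<omega>))) =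
         1 / ((real n + 6) * 2 ^ n) *
         integral\<^sup>L M
           (\<lambda>\<omega>. ln (\<Prod>k\<in>{1..2^n}. real (a_seq n k) * fin1 (X \<omega>) + real (b_seq n k)))"
proof -
  have L: "integral\<^sup>L M (\<lambda>\<omega>. ln (fin1 (X \<omega>))) = LL"
    unfolding LL_def by (rule transfer) simp
  have "integral\<^sup>L M (\<lambda>\<omega>. ln (\<Prod>k\<in>{1..2^n}. real (a_seq n k) * fin1 (X \<omega>) + real (b_seq n k)))
      = integral\<^sup>L nu (\<lambda>x. ln (\<Prod>k\<in>{1..2^n}. real (a_seq n k) * x + real (b_seq n k)))"
    by (rule transfer) simp
  also have "\<dots> = integral\<^sup>L nu (\<lambda>x. \<Sum>k\<in>{1..2^n}. ln (real (a_seq n k) * x + real (b_seq n k)))"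
  proof (rule integral_cong_AE)
    show "AE x in nu. ln (\<Prod>k\<in>{1..2^n}. real (a_seq n k) * x + real (b_seq n k)) = (\<Sum>k\<in>{1..2^n}. ln (real (a_seq n k) * x + real (b_seq n k)))"
      using AE_nu_pos
    proof eventually_elim
      fix x :: real assume x: "0 < x"
      show "ln (\<Prod>k\<in>{1..2^n}. real (a_seq n k) * x + real (b_seq n k)) = (\<Sum>k\<in>{1..2^n}. ln (real (a_seq n k) * x + real (b_seq n k)))"
      proof (rule ln_prod)
        show "finite {1..2^n::nat}" by simp
        fix k
        have "1 \<le> b_seq n k" using ab_ge1[of n k] by (simp add: b_seq_def)
        then have "0 < real (a_seq n k) * x + real (b_seq n k)" using x
          by (simp add: add_nonneg_pos)
        then show "real (a_seq n k) * x + real (b_seq n k) \<noteq> 0" by simp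
      qed
    qed
  qed simp_all
  also have "\<dots> = (\<Sum>k\<in>{1..2^n}. integral\<^sup>L nu (\<lambda>x. ln (real (a_seq n k) * x + real (b_seq n k))))"
  proof (rule Bochner_Integration.integral_sum)
    fix k
    have "1 \<le> b_seq n k" using ab_ge1[of n k] by (simp add: b_seq_def)
    then show "integrable nu (\<lambda>x. ln (real (a_seq n k) * x + real (b_seq n k)))"
      by (intro int_lnab) auto
  qed
  also have "\<dots> = S n" by (simp add: S_def fab_def)
  also have "\<dots> = (real n + 6) * 2^n * LL" by (rule S_closed)
  finally have E: "integral\<^sup>L M (\<lambda>\<omega>. ln (\<Prod>k\<in>{1..2^n}. real (a_seq n k) * fin1 (X \<omega>) + real (b_seq n k))) = ((real n + 6) * 2^n) * LL"
    by simp
  have nz: "(real n + 6) * 2^n \<noteq> 0" by simp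
  have "LL = 1 / ((real n + 6) * 2^n) * (((real n + 6) * 2^n) * LL)" using nz by simp
  then show ?thesis unfolding L E .
qed

end


theorem lemma3p4:
  fixes M :: "'s measure" and X :: "'s \<Rightarrow> real option" and \<epsilon> :: "'s \<Rightarrow> bool" and n :: nat
  assumes "prob_space M"
    and "X \<in> measurable M P1"
    and "\<epsilon> \<in> measurable M (count_space UNIV)"
    and "distr M (count_space UNIV) \<epsilon> = measure_pmf (bernoulli_pmf (1/2))"
    and "\<forall>A\<in>sets P1. \<forall>B::bool set.
         measure M ({\<omega>\<in>space M. X \<omega> \<in> A} \<inter> {\<omega>\<in>space M. \<epsilon> \<omega> \<in> B}) =
         measure M {\<omega>\<in>space M. X \<omega> \<in> A} * measure M {\<omega>\<in>space M. \<epsilon> \<omega> \<in> B}"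
    and "distr M P1 X = distr M P1 (\<lambda>\<omega>. addP1 (inv1 (X \<omega>)) (of_bool (\<epsilon> \<omega>)))"
  shows "prob_space.expectation M (\<lambda>\<omega>. ln (fin1 (X \<omega>))) =
         1 / ((real n + 6) * 2 ^ n) *
         prob_space.expectation M
           (\<lambda>\<omega>. ln (\<Prod>k\<in>{1..2^n}. real (a_seq n k) * fin1 (X \<omega>) + real (b_seq n k)))"
proof -
  interpret L M X \<epsilon> by (rule L.intro) (use assms in auto)
  show ?thesis using main[of n] by simp
qed

end
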